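(* Let $E:\mathbb R^N\to\mathbb R$ be a function which is analytic at a local minimum $\mathbf p$, and let $j,k\ge1$ be integers. Suppose there exists a $(j,2k)$ $E$-flex $\mathbf p(t)$ at $\mathbf p$. Then $E$ grows sometimes-$s$-slowly at $\mathbf p$, where $s=\frac{2k+2}{j}$.
   Context: A trajectory at $\mathbf p$ is an analytic non-constant map $t\mapsto\mathbf p(t)\in\mathbb R^N$, defined for $t\in[0,\varepsilon]$ for some $\varepsilon>0$, with $\mathbf p(0)=\mathbf p$. A $C^k$ function $\varphi(t)$ is $k$-vanishing if $\varphi^{(i)}(0)=0$ for $1\le i\le k$, and $k$-active if $(k-1)$-vanishing but not $k$-vanishing. A $(j,k)$ $E$-flex at $\mathbf p$ is a $j$-active trajectory $\mathbf p(t)$ at $\mathbf p$ such that $E(\mathbf p(t))$ is $k$-vanishing. $E$ grows sometimes-$s$-slowly at $\mathbf p$ if there exist a trajectory $\mathbf q(t)$ at $\mathbf p$ and constants $c_2,\delta>0$ such that $E(\mathbf q(t))-E(\mathbf p)\le c_2|\mathbf q(t)-\mathbf p|^s$ for $t\in[0,\delta]$. *)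

theory Defs
  imports "HOL-Analysis.Analysis"
begin

definition real_analytic_on_interval ::
  "(real \<Rightarrow> 'a::real_normed_vector) \<Rightarrow> real \<Rightarrow> real \<Rightarrow> bool" where
  "real_analytic_on_interval q a b \<longleftrightarrow>
     (\<forall>t0\<in>{a..b}. \<exists>r>0. \<exists>c::nat \<Rightarrow> 'a.
        \<forall>t\<in>{a..b} \<inter> ball t0 r. (\<lambda>k. ((t - t0) ^ k) *\<^sub>R c k) sums q t)"

definition real_analytic_at :: "(real ^ 'n \<Rightarrow> real) \<Rightarrow> real ^ 'n \<Rightarrow> bool" where
  "real_analytic_at E p \<longleftrightarrow>
     (\<exists>r>0. \<exists>c::('n \<Rightarrow> nat) \<Rightarrow> real.
        \<forall>x\<in>ball p r.
          ((\<lambda>\<alpha>. c \<alpha> * (\<Prod>i\<in>UNIV. (x $ i - p $ i) ^ \<alpha> i)) has_sum E x) UNIV)"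

definition trajectory :: "(real \<Rightarrow> real ^ 'n) \<Rightarrow> real ^ 'n \<Rightarrow> bool" where
  "trajectory q p \<longleftrightarrow>
     (\<exists>\<epsilon>>0. real_analytic_on_interval q 0 \<epsilon> \<and> q 0 = p \<and> (\<exists>t\<in>{0..\<epsilon>}. q t \<noteq> p))"

definition k_vanishing :: "nat \<Rightarrow> (real \<Rightarrow> 'a::real_normed_vector) \<Rightarrow> bool" where
  "k_vanishing k \<phi> \<longleftrightarrow>
     (\<exists>\<delta>>0. \<exists>D::nat \<Rightarrow> real \<Rightarrow> 'a.
        (\<forall>t\<in>{0..\<delta>}. D 0 t = \<phi> t) \<and>
        (\<forall>i<k. \<forall>t\<in>{0..\<delta>}. (D i has_vector_derivative D (Suc i) t) (at t within {0..\<delta>})) \<and>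
        continuous_on {0..\<delta>} (D k) \<and>
        (\<forall>i\<in>{1..k}. D i 0 = 0))"

definition k_active :: "nat \<Rightarrow> (real \<Rightarrow> 'a::real_normed_vector) \<Rightarrow> bool" where
  "k_active k \<phi> \<longleftrightarrow> k_vanishing (k - 1) \<phi> \<and> \<not> k_vanishing k \<phi>"

definition E_flex :: "nat \<Rightarrow> nat \<Rightarrow> (real ^ 'n \<Rightarrow> real) \<Rightarrow> real ^ 'n \<Rightarrow> (real \<Rightarrow> real ^ 'n) \<Rightarrow> bool" where
  "E_flex j k E p q \<longleftrightarrow> trajectory q p \<and> k_active j q \<and> k_vanishing k (\<lambda>t. E (q t))"

definition grows_sometimes_slowly :: "real \<Rightarrow> (real ^ 'n \<Rightarrow> real) \<Rightarrow> real ^ 'n \<Rightarrow> bool" where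
  "grows_sometimes_slowly s E p \<longleftrightarrow>
     (\<exists>q. trajectory q p \<and> (\<exists>c2>0. \<exists>\<delta>>0.
        \<forall>t\<in>{0..\<delta>}. E (q t) - E p \<le> c2 * norm (q t - p) powr s))"

definition local_min :: "(real ^ 'n \<Rightarrow> real) \<Rightarrow> real ^ 'n \<Rightarrow> bool" where
  "local_min E p \<longleftrightarrow> (\<exists>r>0. \<forall>x\<in>ball p r. E p \<le> E x)"

end

theory Submission
  imports Defs
begin


definition ps_on :: "real \<Rightarrow> (nat \<Rightarrow> real) \<Rightarrow> (real \<Rightarrow> real) \<Rightarrow> bool" where
  "ps_on K b f \<longleftrightarrow> (\<forall>t. \<bar>t\<bar> < K \<longrightarrow> (\<lambda>n. b n * t ^ n) sums f t)"

lemma ps_abs: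
  assumes "ps_on K b f" "\<bar>t\<bar> < K"
  shows "summable (\<lambda>n. \<bar>b n * t ^ n\<bar>)"
proof -
  define t' where "t' = (\<bar>t\<bar> + K) / 2"
  have "\<bar>t'\<bar> < K" "\<bar>t\<bar> < \<bar>t'\<bar>" using assms(2) by (auto simp: t'_def)
  then have "summable (\<lambda>n. b n * t' ^ n)" using assms(1) sums_summable unfolding ps_on_def by blast
  from powser_insidea[OF this, of t] \<open>\<bar>t\<bar> < \<bar>t'\<bar>\<close> show ?thesis by simp
qed

lemma ps_const: "ps_on K (\<lambda>n. if n = 0 then c else 0) (\<lambda>_. c)"
  unfolding ps_on_def
proof (intro allI impI)
  fix t :: real
  have "(\<lambda>n. (if n = 0 then c else 0) * t ^ n) = (\<lambda>n. if n = 0 then (\<lambda>_. c) n else 0)" by auto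
  then show "(\<lambda>n. (if n = 0 then c else 0) * t ^ n) sums c" using sums_single[of 0 "\<lambda>_. c"] by simp
qed

lemma ps_add: "ps_on K a f \<Longrightarrow> ps_on K b g \<Longrightarrow> ps_on K (\<lambda>n. a n + b n) (\<lambda>t. f t + g t)"
  unfolding ps_on_def by (auto simp: distrib_right intro: sums_add)

lemma ps_mult:
  assumes "ps_on K a f" "ps_on K b g"
  shows "ps_on K (\<lambda>n. \<Sum>i\<le>n. a i * b (n - i)) (\<lambda>t. f t * g t)"
  unfolding ps_on_def
proof (intro allI impI)
  fix t :: real assume t: "\<bar>t\<bar> < K"
  have fa: "(\<lambda>n. a n * t ^ n) sums f t" and gb: "(\<lambda>n. b n * t ^ n) sums g t"
    using assms t unfolding ps_on_def by auto
  have "(\<lambda>k. \<Sum>i\<le>k. (a i * t ^ i) * (b (k - i) * t ^ (k - i))) sums ((\<Sum>k. a k * t ^ k) * (\<Sum>k. b k * t ^ k))"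
    by (rule Cauchy_product_sums) (use ps_abs[OF assms(1) t] ps_abs[OF assms(2) t] in auto)
  moreover have "(\<lambda>k. \<Sum>i\<le>k. (a i * t ^ i) * (b (k - i) * t ^ (k - i))) = (\<lambda>n. (\<Sum>i\<le>n. a i * b (n - i)) * t ^ n)"
  proof
    fix k
    have "(\<Sum>i\<le>k. (a i * t ^ i) * (b (k - i) * t ^ (k - i))) = (\<Sum>i\<le>k. (a i * b (k - i)) * t ^ k)"
    proof (rule sum.cong)
      fix i assume "i \<in> {..k}"
      then have "t ^ i * t ^ (k - i) = t ^ k" by (simp add: power_add[symmetric])
      then show "(a i * t ^ i) * (b (k - i) * t ^ (k - i)) = (a i * b (k - i)) * t ^ k"
        by (metis mult.assoc mult.left_commute)
    qed simp
    then show "(\<Sum>i\<le>k. (a i * t ^ i) * (b (k - i) * t ^ (k - i))) = (\<Sum>i\<le>k. a i * b (k - i)) * t ^ k"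
      by (simp add: sum_distrib_right)
  qed
  ultimately show "(\<lambda>n. (\<Sum>i\<le>n. a i * b (n - i)) * t ^ n) sums (f t * g t)"
    using sums_unique[OF fa] sums_unique[OF gb] by simp
qed

lemma ps_ex_const: "\<exists>b. ps_on K b (\<lambda>_. c)" using ps_const by blast

lemma ps_ex_add: "\<exists>a. ps_on K a f \<Longrightarrow> \<exists>b. ps_on K b g \<Longrightarrow> \<exists>b. ps_on K b (\<lambda>t. f t + g t)"
  using ps_add by blast
lemma ps_ex_mult: "\<exists>a. ps_on K a f \<Longrightarrow> \<exists>b. ps_on K b g \<Longrightarrow> \<exists>b. ps_on K b (\<lambda>t. f t * g t)"
  using ps_mult by blast

lemma ps_ex_sum:
  assumes "finite A" "\<And>x. x \<in> A \<Longrightarrow> \<exists>b. ps_on K b (f x)"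
  shows "\<exists>b. ps_on K b (\<lambda>t. \<Sum>x\<in>A. f x t)"
  using assms
proof (induction A rule: finite_induct)
  case empty then show ?case using ps_ex_const[of K 0] by simp
next
  case (insert x F)
  then show ?case using ps_ex_add[of K "f x" "\<lambda>t. \<Sum>x\<in>F. f x t"] by simp
qed

lemma ps_ex_prod:
  assumes "finite A" "\<And>x. x \<in> A \<Longrightarrow> \<exists>b. ps_on K b (f x)"
  shows "\<exists>b. ps_on K b (\<lambda>t. \<Prod>x\<in>A. f x t)"
  using assms
proof (induction A rule: finite_induct)
  case empty then show ?case using ps_ex_const[of K 1] by simp
next
  case (insert x F)
  then show ?case using ps_ex_mult[of K "f x" "\<lambda>t. \<Prod>x\<in>F. f x t"] by simp
qed

lemma ps_ex_power:
  assumes "\<exists>b. ps_on K b f"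
  shows "\<exists>b. ps_on K b (\<lambda>t. f t ^ m)"
proof (induction m)
  case 0 then show ?case using ps_ex_const[of K 1] by simp
next
  case (Suc m) then show ?case using ps_ex_mult[OF assms Suc] by simp
qed

lemma ps_tail:
  assumes "ps_on K b f" "0 < \<delta>" "\<delta> < K"
  shows "\<exists>C\<ge>0. \<forall>t. \<bar>t\<bar> \<le> \<delta> \<longrightarrow> \<bar>f t - (\<Sum>i<m. b i * t ^ i)\<bar> \<le> C * \<bar>t\<bar> ^ m"
proof -
  have s0: "summable (\<lambda>n. \<bar>b n * \<delta> ^ n\<bar>)" using ps_abs[OF assms(1)] assms(2,3) by simp
  have s1: "summable (\<lambda>i. \<bar>b (i + m) * \<delta> ^ (i + m)\<bar>)"
    using summable_ignore_initial_segment[OF s0, of m] by simp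
  have eq: "(\<lambda>i. \<bar>b (i + m) * \<delta> ^ (i + m)\<bar> / \<delta> ^ m) = (\<lambda>i. \<bar>b (i + m)\<bar> * \<delta> ^ i)"
    using assms(2) by (auto simp: abs_mult power_add)
  have s2: "summable (\<lambda>i. \<bar>b (i + m)\<bar> * \<delta> ^ i)"
    using summable_divide[OF s1, of "\<delta> ^ m"] unfolding eq .
  define C where "C = (\<Sum>i. \<bar>b (i + m)\<bar> * \<delta> ^ i)"
  have C0: "C \<ge> 0" unfolding C_def using assms(2) by (intro suminf_nonneg[OF s2]) auto
  show ?thesis
  proof (intro exI[of _ C] conjI allI impI C0)
    fix t :: real assume t: "\<bar>t\<bar> \<le> \<delta>"
    then have "\<bar>t\<bar> < K" using assms by simp
    then have "(\<lambda>n. b n * t ^ n) sums f t" using assms(1) unfolding ps_on_def by blast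
    then have sh: "(\<lambda>i. b (i + m) * t ^ (i + m)) sums (f t - (\<Sum>i<m. b i * t ^ i))"
      using sums_iff_shift[of "\<lambda>n. b n * t ^ n" m] by simp
    have le: "\<bar>b (i + m) * t ^ (i + m)\<bar> \<le> \<bar>t\<bar> ^ m * (\<bar>b (i + m)\<bar> * \<delta> ^ i)" for i
    proof -
      have "\<bar>t\<bar> ^ i \<le> \<delta> ^ i" using t by (intro power_mono) auto
      then have "\<bar>b (i + m)\<bar> * \<bar>t\<bar> ^ i \<le> \<bar>b (i + m)\<bar> * \<delta> ^ i" by (intro mult_left_mono) auto
      then have "\<bar>t\<bar> ^ m * (\<bar>b (i + m)\<bar> * \<bar>t\<bar> ^ i) \<le> \<bar>t\<bar> ^ m * (\<bar>b (i + m)\<bar> * \<delta> ^ i)"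
        by (rule mult_left_mono) simp
      then show ?thesis by (simp add: abs_mult power_abs power_add algebra_simps)
    qed
    have s3: "summable (\<lambda>i. \<bar>t\<bar> ^ m * (\<bar>b (i + m)\<bar> * \<delta> ^ i))" using summable_mult[OF s2, of "\<bar>t\<bar> ^ m"] .
    have "\<bar>f t - (\<Sum>i<m. b i * t ^ i)\<bar> = \<bar>\<Sum>i. b (i + m) * t ^ (i + m)\<bar>" using sums_unique[OF sh] by simp
    also have "\<dots> \<le> (\<Sum>i. \<bar>t\<bar> ^ m * (\<bar>b (i + m)\<bar> * \<delta> ^ i))"
    proof -
      have sa: "summable (\<lambda>i. \<bar>b (i + m) * t ^ (i + m)\<bar>)"
        by (rule summable_comparison_test'[OF s3, of 0]) (use le in simp)
      have "\<bar>\<Sum>i. b (i + m) * t ^ (i + m)\<bar> \<le> (\<Sum>i. \<bar>b (i + m) * t ^ (i + m)\<bar>)"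
        using summable_rabs[OF sa] by simp
      also have "\<dots> \<le> (\<Sum>i. \<bar>t\<bar> ^ m * (\<bar>b (i + m)\<bar> * \<delta> ^ i))"
        by (rule suminf_le[OF le sa s3])
      finally show ?thesis .
    qed
    also have "\<dots> = C * \<bar>t\<bar> ^ m" unfolding C_def using suminf_mult[OF s2, of "\<bar>t\<bar> ^ m"] by simp
    finally show "\<bar>f t - (\<Sum>i<m. b i * t ^ i)\<bar> \<le> C * \<bar>t\<bar> ^ m" .
  qed
qed



lemma ps_unique:
  assumes ps: "ps_on K b f" and K: "0 < K"
    and small: "\<forall>e>0. \<exists>d>0. \<forall>t. 0 < t \<and> t < d \<longrightarrow> \<bar>f t\<bar> \<le> e * t ^ N"
  shows "\<forall>i\<le>N. b i = 0"
proof -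
  have "i \<le> N \<Longrightarrow> b i = 0" for i
  proof (induction i rule: less_induct)
    case (less i)
    obtain C where C0: "C \<ge> 0" and hC: "\<forall>t. \<bar>t\<bar> \<le> K/2 \<longrightarrow> \<bar>f t - (\<Sum>i'<Suc i. b i' * t ^ i')\<bar> \<le> C * \<bar>t\<bar> ^ Suc i"
      using ps_tail[OF ps, of "K/2" "Suc i"] K by auto
    have sumeq: "(\<Sum>i'<Suc i. b i' * t ^ i') = b i * t ^ i" for t
      using less.IH less.prems by simp
    show "b i = 0"
    proof (rule ccontr)
      assume nz: "b i \<noteq> 0"
      then have bpos: "\<bar>b i\<bar> > 0" by simp
      obtain d where d: "d > 0" "\<forall>t. 0 < t \<and> t < d \<longrightarrow> \<bar>f t\<bar> \<le> (\<bar>b i\<bar>/4) * t ^ N"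
      proof -
        have "\<bar>b i\<bar>/4 > 0" using bpos by simp
        then show ?thesis using small that by blast
      qed
      define t where "t = min (min d (K/2)) (min 1 (\<bar>b i\<bar> / (4 * (C + 1)))) / 2"
      have t0: "t > 0" unfolding t_def using d K bpos C0 by auto
      have td: "t < d" "t \<le> K/2" "t \<le> 1" unfolding t_def using d K bpos C0 by auto
      have mle: "min (min d (K/2)) (min 1 (\<bar>b i\<bar> / (4 * (C + 1)))) \<le> \<bar>b i\<bar> / (4 * (C + 1))" by simp
      have "t \<le> \<bar>b i\<bar> / (4 * (C + 1))" using t0 mle unfolding t_def by linarith
      then have "t * (4 * (C + 1)) \<le> \<bar>b i\<bar>" using C0 by (simp add: field_simps)
      then have Ct: "C * t \<le> \<bar>b i\<bar> / 4" using C0 t0 by (simp add: algebra_simps)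
      have ft: "\<bar>f t\<bar> \<le> (\<bar>b i\<bar>/4) * t ^ N" using d t0 td by auto
      have tN: "t ^ N \<le> t ^ i" using t0 td less.prems by (intro power_decreasing) auto
      have "\<bar>t\<bar> \<le> K/2" using td t0 by simp
      then have h: "\<bar>f t - (\<Sum>i'<Suc i. b i' * t ^ i')\<bar> \<le> C * \<bar>t\<bar> ^ Suc i" using hC by blast
      have tail: "\<bar>f t - b i * t ^ i\<bar> \<le> C * t ^ Suc i" using h unfolding sumeq[of t] abs_of_pos[OF t0] .
      have "\<bar>b i\<bar> * t ^ i = \<bar>b i * t ^ i\<bar>" using t0 by (simp add: abs_mult)
      also have "\<dots> \<le> \<bar>f t\<bar> + C * t ^ Suc i" using tail by linarith
      also have "\<dots> \<le> (\<bar>b i\<bar>/4) * t ^ i + (C * t) * t ^ i"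
      proof -
        have "(\<bar>b i\<bar>/4) * t ^ N \<le> (\<bar>b i\<bar>/4) * t ^ i" by (rule mult_left_mono[OF tN]) simp
        moreover have "C * t ^ Suc i = (C * t) * t ^ i" by simp
        ultimately show ?thesis using ft by linarith
      qed
      also have "\<dots> \<le> (\<bar>b i\<bar>/4) * t ^ i + (\<bar>b i\<bar>/4) * t ^ i"
        using Ct t0 by (intro add_left_mono mult_right_mono) auto
      finally have "\<bar>b i\<bar> * t ^ i \<le> (\<bar>b i\<bar>/2) * t ^ i" by simp
      moreover have "t ^ i > 0" using t0 by simp
      ultimately have "\<bar>b i\<bar> \<le> \<bar>b i\<bar>/2" by (metis mult_le_cancel_right_pos)
      then show False using bpos by simp
    qed
  qed
  then show ?thesis by blast
qed

lemma kvan_bound: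
  fixes \<phi> :: "real \<Rightarrow> real"
  assumes "k_vanishing n \<phi>"
  shows "\<forall>e>0. \<exists>d>0. \<forall>t\<in>{0..d}. \<bar>\<phi> t - \<phi> 0\<bar> \<le> e * t ^ n"
proof (intro allI impI)
  fix e :: real assume e: "e > 0"
  obtain \<delta> D where \<delta>: "\<delta> > 0" and D0: "\<forall>t\<in>{0..\<delta>}. D 0 t = \<phi> t"
    and Dd: "\<forall>i<n. \<forall>t\<in>{0..\<delta>}. (D i has_vector_derivative D (Suc i) t) (at t within {0..\<delta>})"
    and Dc: "continuous_on {0..\<delta>} (D n)" and Dz: "\<forall>i\<in>{1..n}. D i 0 = (0::real)"
    using assms unfolding k_vanishing_def by blast
  have "(0::real) \<in> {0..\<delta>}" using \<delta> by simp
  then obtain d where d: "d > 0" "\<forall>t\<in>{0..\<delta>}. dist t 0 < d \<longrightarrow> dist (D n t) (D n 0) < e"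
    using Dc e unfolding continuous_on_iff by blast
  define d' where "d' = min \<delta> (d/2)"
  have d': "d' > 0" "d' \<le> \<delta>" "d' < d" using d \<delta> by (auto simp: d'_def)
  have claim: "i \<le> n \<Longrightarrow> \<forall>t\<in>{0..d'}. \<bar>D (n - i) t - D (n - i) 0\<bar> \<le> e * t ^ i" for i
  proof (induction i)
    case 0
    show ?case
    proof
      fix t assume t: "t \<in> {0..d'}"
      then have "dist (D n t) (D n 0) < e" using d d' by (auto simp: dist_real_def)
      then show "\<bar>D (n - 0) t - D (n - 0) 0\<bar> \<le> e * t ^ 0" by (simp add: dist_real_def)
    qed
  next
    case (Suc i)
    define m where "m = n - Suc i"
    have nm: "n - i = Suc m" "m < n" using Suc.prems by (auto simp: m_def)
    have IH: "\<forall>t\<in>{0..d'}. \<bar>D (Suc m) t - D (Suc m) 0\<bar> \<le> e * t ^ i"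
      using Suc.IH Suc.prems nm by auto
    have z: "D (Suc m) 0 = 0" using Dz nm by auto
    show ?case
    proof
      fix t assume t: "t \<in> {0..d'}"
      have der: "(D m has_derivative (\<lambda>h. h * D (Suc m) x)) (at x within {0..t})" if "0 \<le> x" "x \<le> t" for x
      proof -
        have "(D m has_vector_derivative D (Suc m) x) (at x within {0..\<delta>})"
          using Dd nm that t d' by auto
        then have "(D m has_vector_derivative D (Suc m) x) (at x within {0..t})"
          by (rule has_vector_derivative_within_subset) (use t d' in auto)
        then show ?thesis by (simp add: has_vector_derivative_def)
      qed
      have "\<exists>x\<in>{0..t}. D m t - D m 0 = (\<lambda>h. h * D (Suc m) x) (t - 0)"
        by (rule mvt_very_simple) (use t der in auto)
      then obtain x where x: "x \<in> {0..t}" "D m t - D m 0 = (t - 0) * D (Suc m) x" by auto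
      have "\<bar>D (Suc m) x\<bar> \<le> e * x ^ i" using IH x t z by auto
      also have "\<dots> \<le> e * t ^ i" using x e by (auto intro!: mult_left_mono power_mono)
      finally have "\<bar>t * D (Suc m) x\<bar> \<le> t * (e * t ^ i)" using t by (auto simp: abs_mult intro: mult_left_mono)
      then show "\<bar>D (n - Suc i) t - D (n - Suc i) 0\<bar> \<le> e * t ^ Suc i"
        using x by (simp add: m_def[symmetric] algebra_simps)
    qed
  qed
  show "\<exists>d>0. \<forall>t\<in>{0..d}. \<bar>\<phi> t - \<phi> 0\<bar> \<le> e * t ^ n"
  proof (intro exI[of _ d'] conjI ballI d'(1))
    fix t assume t: "t \<in> {0..d'}"
    have "\<bar>D 0 t - D 0 0\<bar> \<le> e * t ^ n" using claim[of n] t by simp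
    moreover have "D 0 t = \<phi> t" "D 0 0 = \<phi> 0" using D0 t d' \<delta> by auto
    ultimately show "\<bar>\<phi> t - \<phi> 0\<bar> \<le> e * t ^ n" by simp
  qed
qed


lemma diffs_iter: "(diffs ^^ i) c n = (fact (n + i) / fact n) * (c (n + i) :: real)"
proof (induction i arbitrary: n)
  case 0 then show ?case by simp
next
  case (Suc i)
  have "(diffs ^^ Suc i) c n = of_nat (Suc n) * (diffs ^^ i) c (Suc n)" by (simp add: diffs_def)
  also have "\<dots> = of_nat (Suc n) * ((fact (Suc n + i) / fact (Suc n)) * c (Suc n + i))" using Suc by simp
  also have "\<dots> = (fact (n + Suc i) / fact n) * c (n + Suc i)"
  proof -
    have e: "x \<noteq> 0 \<Longrightarrow> b \<noteq> 0 \<Longrightarrow> x * (a / (x * b) * cc) = a / b * cc" for x a b cc :: real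
      by (simp add: field_simps)
    have "(fact (Suc n) :: real) = of_nat (Suc n) * fact n" by (rule fact_Suc)
    moreover have "Suc n + i = n + Suc i" by simp
    ultimately show ?thesis using e[of "of_nat (Suc n)" "fact n"] by (simp del: of_nat_Suc fact_Suc)
  qed
  finally show ?case .
qed

lemma diffs_iter0: "(diffs ^^ i) c 0 = fact i * (c i :: real)"
  using diffs_iter[of i c 0] by simp

lemma vec_as_sum: "(\<chi> l. g l) = (\<Sum>l\<in>UNIV. g l *\<^sub>R axis l (1::real))"
  by (simp add: vec_eq_iff sum_component axis_def if_distrib sum.delta sum.delta' cong: if_cong)

lemma vec_deriv_comp:
  assumes "\<And>l. (f l has_real_derivative f' l) (at t within S)"
  shows "((\<lambda>t. \<chi> l. f l t) has_vector_derivative (\<chi> l. f' l)) (at t within S)"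
proof -
  have "((\<lambda>t. \<Sum>l\<in>UNIV. f l t *\<^sub>R axis l (1::real)) has_vector_derivative
        (\<Sum>l\<in>UNIV. f l t *\<^sub>R 0 + f' l *\<^sub>R axis l 1)) (at t within S)"
    by (intro has_vector_derivative_sum has_vector_derivative_scaleR assms has_vector_derivative_const)
  then show ?thesis by (simp add: vec_as_sum)
qed



lemma coeffs_vanish:
  fixes q :: "real \<Rightarrow> real^'n" and c :: "nat \<Rightarrow> real^'n"
  assumes T: "0 < T"
    and sq: "\<forall>t\<in>{0..T}. (\<lambda>k. t^k *\<^sub>R c k) sums q t"
    and z: "\<forall>l. \<forall>m\<in>{1..j}. c m $ l = 0"
  shows "k_vanishing j q"
proof -
  define cl where "cl l n = c n $ l" for l n
  have comp: "(\<lambda>n. cl l n * t^n) sums (q t $ l)" if "t \<in> {0..T}" for l t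
  proof -
    have "(\<lambda>k. (t^k *\<^sub>R c k) $ l) sums (q t $ l)" using sums_vec_nth[OF sq[rule_format, OF that]] .
    then show ?thesis by (simp add: cl_def mult.commute)
  qed
  have sm0: "summable (\<lambda>n. cl l n * x^n)" if "\<bar>x\<bar> < T" for l x
  proof -
    have "summable (\<lambda>n. cl l n * T^n)" using comp[of T l] T sums_summable by auto
    from powser_insidea[OF this, of x] that T have "summable (\<lambda>n. \<bar>cl l n * x^n\<bar>)" by simp
    then show ?thesis by (rule summable_rabs_cancel)
  qed
  have smi: "\<bar>x\<bar> < T \<Longrightarrow> summable (\<lambda>n. (diffs^^i) (cl l) n * x^n)" for i l x
  proof (induction i arbitrary: x)
    case 0 then show ?case using sm0 by simp
  next
    case (Suc i)
    have "summable (\<lambda>n. diffs ((diffs^^i) (cl l)) n * x^n)"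
      by (rule termdiff_converges[of x T]) (use Suc in auto)
    then show ?case by simp
  qed
  define D where "D i t = (\<chi> l. \<Sum>n. (diffs^^i) (cl l) n * t^n)" for i t
  have der: "(D i has_vector_derivative D (Suc i) t) (at t within S)" if "\<bar>t\<bar> < T" for i t S
    unfolding D_def
  proof (rule vec_deriv_comp)
    fix l
    have "((\<lambda>z. \<Sum>n. (diffs^^i) (cl l) n * z^n) has_field_derivative (\<Sum>n. diffs ((diffs^^i) (cl l)) n * t^n)) (at t)"
      by (rule termdiffs_strong'[of T]) (use smi that in auto)
    then show "((\<lambda>z. \<Sum>n. (diffs^^i) (cl l) n * z^n) has_field_derivative (\<Sum>n. (diffs^^Suc i) (cl l) n * t^n)) (at t within S)"
      by (simp add: has_field_derivative_at_within)
  qed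
  show ?thesis unfolding k_vanishing_def
  proof (intro exI[of _ "T/2"] exI[of _ D] conjI)
    show "T/2 > 0" using T by simp
    show "\<forall>t\<in>{0..T/2}. D 0 t = q t"
    proof
      fix t :: real assume t: "t \<in> {0..T/2}"
      then have "t \<in> {0..T}" by auto
      then have "(\<Sum>n. cl l n * t^n) = q t $ l" for l using comp sums_unique by metis
      then show "D 0 t = q t" unfolding D_def by (simp add: vec_eq_iff)
    qed
    show "\<forall>i<j. \<forall>t\<in>{0..T/2}. (D i has_vector_derivative D (Suc i) t) (at t within {0..T/2})"
      using der T by auto
    show "continuous_on {0..T/2} (D j)"
      unfolding continuous_on_eq_continuous_within
    proof
      fix t assume "t \<in> {0..T/2}"
      then have "\<bar>t\<bar> < T" using T by auto
      then show "continuous (at t within {0..T/2}) (D j)" by (rule has_vector_derivative_continuous[OF der])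
    qed
    show "\<forall>i\<in>{1..j}. D i 0 = 0"
    proof
      fix i assume i: "i \<in> {1..j}"
      have "D i 0 = (\<chi> l. fact i * cl l i)" unfolding D_def by (simp add: diffs_iter0)
      also have "\<dots> = 0" using z i by (simp add: vec_eq_iff cl_def)
      finally show "D i 0 = 0" .
    qed
  qed
qed



lemma finite_B: "finite {\<alpha> :: 'n::finite \<Rightarrow> nat. sum \<alpha> UNIV < N}"
proof (rule finite_subset)
  show "{\<alpha> :: 'n \<Rightarrow> nat. sum \<alpha> UNIV < N} \<subseteq> PiE UNIV (\<lambda>_. {..<N})"
  proof
    fix \<alpha> :: "'n \<Rightarrow> nat" assume a: "\<alpha> \<in> {\<alpha>. sum \<alpha> UNIV < N}"
    have "\<alpha> i < N" for i using member_le_sum[of i UNIV \<alpha>] a by simp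
    then show "\<alpha> \<in> PiE UNIV (\<lambda>_. {..<N})" by (simp add: PiE_UNIV_domain)
  qed
  show "finite (PiE (UNIV::'n set) (\<lambda>_. {..<N}))" by (rule finite_PiE) auto
qed

lemma mono_bound:
  fixes h :: "real^'n" and ca :: real
  assumes h: "\<forall>i. \<bar>h$i\<bar> \<le> M" and M: "0 \<le> M" "M \<le> \<rho>" and \<rho>: "0 < \<rho>" and n: "N \<le> sum \<alpha> UNIV"
  shows "\<bar>ca * (\<Prod>i\<in>UNIV. (h$i)^\<alpha> i)\<bar> \<le> (M/\<rho>)^N * \<bar>ca * \<rho> ^ sum \<alpha> UNIV\<bar>"
proof -
  have "\<bar>\<Prod>i\<in>UNIV. (h$i)^\<alpha> i\<bar> = (\<Prod>i\<in>UNIV. \<bar>h$i\<bar>^\<alpha> i)" by (simp add: abs_prod power_abs)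
  also have "\<dots> \<le> (\<Prod>i\<in>UNIV. M^\<alpha> i)" by (rule prod_mono) (use h in \<open>auto intro: power_mono\<close>)
  also have "\<dots> = M ^ sum \<alpha> UNIV" by (simp add: power_sum)
  also have "\<dots> = (M/\<rho>) ^ sum \<alpha> UNIV * \<rho> ^ sum \<alpha> UNIV" using \<rho> by (simp add: power_divide)
  also have "\<dots> \<le> (M/\<rho>) ^ N * \<rho> ^ sum \<alpha> UNIV"
    by (rule mult_right_mono[OF power_decreasing]) (use M \<rho> n in auto)
  finally have "\<bar>\<Prod>i\<in>UNIV. (h$i)^\<alpha> i\<bar> \<le> (M/\<rho>) ^ N * \<rho> ^ sum \<alpha> UNIV" .
  then have "\<bar>ca\<bar> * \<bar>\<Prod>i\<in>UNIV. (h$i)^\<alpha> i\<bar> \<le> \<bar>ca\<bar> * ((M/\<rho>) ^ N * \<rho> ^ sum \<alpha> UNIV)"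
    by (rule mult_left_mono) simp
  then show ?thesis using \<rho> by (simp add: abs_mult mult_ac)
qed

lemma E_tail:
  fixes E :: "real^'n \<Rightarrow> real" and ca :: "('n \<Rightarrow> nat) \<Rightarrow> real"
  assumes hs: "\<forall>x\<in>ball p r. ((\<lambda>\<alpha>. ca \<alpha> * (\<Prod>i\<in>UNIV. (x$i - p$i)^\<alpha> i)) has_sum E x) UNIV"
    and \<rho>: "0 < \<rho>" and S: "(\<lambda>\<alpha>. \<bar>ca \<alpha> * \<rho> ^ sum \<alpha> UNIV\<bar>) summable_on UNIV"
    and h: "\<forall>i. \<bar>h$i\<bar> \<le> M" and M: "0 \<le> M" "M \<le> \<rho>" and hin: "p + h \<in> ball p r"
  shows "\<bar>E (p + h) - (\<Sum>\<alpha>\<in>{\<alpha>. sum \<alpha> UNIV < N}. ca \<alpha> * (\<Prod>i\<in>UNIV. (h$i)^\<alpha> i))\<bar>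
           \<le> (M/\<rho>)^N * (\<Sum>\<^sub>\<infinity>\<alpha>. \<bar>ca \<alpha> * \<rho> ^ sum \<alpha> UNIV\<bar>)"
proof -
  define B where "B = {\<alpha> :: 'n \<Rightarrow> nat. sum \<alpha> UNIV < N}"
  define f where "f \<alpha> = ca \<alpha> * (\<Prod>i\<in>UNIV. (h$i)^\<alpha> i)" for \<alpha>
  define g where "g \<alpha> = \<bar>ca \<alpha> * \<rho> ^ sum \<alpha> UNIV\<bar>" for \<alpha>
  have fin: "finite B" unfolding B_def by (rule finite_B)
  have hf: "(f has_sum E (p + h)) UNIV"
  proof -
    have "((\<lambda>\<alpha>. ca \<alpha> * (\<Prod>i\<in>UNIV. ((p + h)$i - p$i)^\<alpha> i)) has_sum E (p + h)) UNIV"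
      using hs hin by blast
    moreover have "((p + h)$i - p$i) = h$i" for i by simp
    ultimately show ?thesis unfolding f_def by simp
  qed
  then have fs: "f summable_on UNIV" by (rule has_sum_imp_summable)
  have fsB: "f summable_on B" and fsC: "f summable_on (-B)" using summable_on_subset_banach[OF fs] by auto
  have "E (p + h) = infsum f (B \<union> -B)" using infsumI[OF hf] by simp
  also have "\<dots> = infsum f B + infsum f (-B)" by (rule infsum_Un_disjoint[OF fsB fsC]) auto
  finally have eq: "E (p + h) - sum f B = infsum f (-B)" using fin by simp
  have gs: "g summable_on UNIV" using S unfolding g_def .
  have gsC: "g summable_on (-B)" using summable_on_subset_banach[OF gs] by auto
  have pw: "\<bar>f \<alpha>\<bar> \<le> (M/\<rho>)^N * g \<alpha>" if "\<alpha> \<in> -B" for \<alpha>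
    unfolding f_def g_def by (rule mono_bound[OF h M \<rho>]) (use that in \<open>auto simp: B_def\<close>)
  have fa: "(\<lambda>\<alpha>. norm (f \<alpha>)) summable_on (-B)" using fsC summable_on_iff_abs_summable_on_real by blast
  have "\<bar>infsum f (-B)\<bar> \<le> infsum (\<lambda>\<alpha>. norm (f \<alpha>)) (-B)"
    using norm_infsum_bound[OF fa] by simp
  also have "\<dots> \<le> infsum (\<lambda>\<alpha>. (M/\<rho>)^N * g \<alpha>) (-B)"
    by (rule infsum_mono[OF fa summable_on_cmult_right[OF gsC]]) (use pw in simp)
  also have "\<dots> = (M/\<rho>)^N * infsum g (-B)" by (rule infsum_cmult_right')
  also have "\<dots> \<le> (M/\<rho>)^N * infsum g UNIV"
    by (rule mult_left_mono[OF infsum_mono_neutral[OF gsC gs]]) (use M \<rho> in \<open>auto simp: g_def\<close>)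
  finally show ?thesis using eq unfolding B_def f_def g_def by simp
qed



lemma traj_setup:
  assumes "trajectory q p"
  shows "\<exists>T c. T > 0 \<and> (\<forall>t\<in>{0..T}. (\<lambda>k. t^k *\<^sub>R c k) sums q t) \<and> c 0 = p"
proof -
  obtain \<epsilon> where \<epsilon>: "\<epsilon> > 0" and ana: "real_analytic_on_interval q 0 \<epsilon>" and q0: "q 0 = p"
    using assms unfolding trajectory_def by blast
  have "(0::real) \<in> {0..\<epsilon>}" using \<epsilon> by simp
  then obtain r0 c where r0: "r0 > 0" and sc: "\<forall>t\<in>{0..\<epsilon>} \<inter> ball 0 r0. (\<lambda>k. (t - 0) ^ k *\<^sub>R c k) sums q t"
    using ana unfolding real_analytic_on_interval_def by blast
  define T where "T = min \<epsilon> (r0/2)"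
  have T: "T > 0" using \<epsilon> r0 by (simp add: T_def)
  have sq: "\<forall>t\<in>{0..T}. (\<lambda>k. t^k *\<^sub>R c k) sums q t"
  proof
    fix t assume "t \<in> {0..T}"
    then have "t \<in> {0..\<epsilon>} \<inter> ball 0 r0" using r0 by (auto simp: T_def dist_real_def)
    then show "(\<lambda>k. t^k *\<^sub>R c k) sums q t" using sc by fastforce
  qed
  have "(\<lambda>k. (0::real)^k *\<^sub>R c k) sums q 0" using sq T by auto
  moreover have "(\<lambda>k. (0::real)^k *\<^sub>R c k) sums c 0"
  proof -
    have "(\<lambda>k. (0::real)^k *\<^sub>R c k) = (\<lambda>k. if k = 0 then c k else 0)" by auto
    then show ?thesis using sums_single[of 0 c] by simp
  qed
  ultimately have "c 0 = p" using q0 sums_unique2 by metis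
  then show ?thesis using T sq by blast
qed

lemma comp_ps:
  fixes q :: "real \<Rightarrow> real^'n" and c :: "nat \<Rightarrow> real^'n"
  assumes T: "0 < T" and sq: "\<forall>t\<in>{0..T}. (\<lambda>k. t^k *\<^sub>R c k) sums q t"
  shows "ps_on T (\<lambda>n. c n $ l) (\<lambda>t. \<Sum>n. c n $ l * t^n)"
    and "\<forall>t\<in>{0..T}. q t $ l = (\<Sum>n. c n $ l * t^n)"
proof -
  have comp: "(\<lambda>n. c n $ l * t^n) sums (q t $ l)" if "t \<in> {0..T}" for t
  proof -
    have "(\<lambda>k. (t^k *\<^sub>R c k) $ l) sums (q t $ l)" using sums_vec_nth[OF sq[rule_format, OF that]] .
    then show ?thesis by (simp add: mult.commute)
  qed
  show "\<forall>t\<in>{0..T}. q t $ l = (\<Sum>n. c n $ l * t^n)" using comp sums_unique by metis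
  show "ps_on T (\<lambda>n. c n $ l) (\<lambda>t. \<Sum>n. c n $ l * t^n)"
    unfolding ps_on_def
  proof (intro allI impI)
    fix x :: real assume x: "\<bar>x\<bar> < T"
    have "summable (\<lambda>n. c n $ l * T^n)" using comp[of T] T sums_summable by auto
    from powser_insidea[OF this, of x] x T have "summable (\<lambda>n. \<bar>c n $ l * x^n\<bar>)" by simp
    then have "summable (\<lambda>n. c n $ l * x^n)" by (rule summable_rabs_cancel)
    then show "(\<lambda>n. c n $ l * x ^ n) sums (\<Sum>n. c n $ l * x^n)" by (rule summable_sums)
  qed
qed

lemma ps_at0:
  assumes "ps_on K b f" "0 < K" shows "f 0 = b 0"
proof -
  have "\<bar>0::real\<bar> < K" using assms by simp
  then have "(\<lambda>n. b n * 0^n) sums f 0" using assms(1) unfolding ps_on_def by blast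
  then have "f 0 = (\<Sum>n. b n * 0^n)" by (rule sums_unique)
  then show ?thesis by simp
qed



theorem lemma3p10:
  fixes E :: "real ^ 'n \<Rightarrow> real" and p :: "real ^ 'n" and j k :: nat
  assumes "real_analytic_at E p" and "local_min E p"
    and "j \<ge> 1" and "k \<ge> 1"
    and "\<exists>q. E_flex j (2 * k) E p q"
  shows "grows_sometimes_slowly ((2 * real k + 2) / real j) E p"
proof -
  obtain q where traj: "trajectory q p" and act: "k_active j q" and van: "k_vanishing (2*k) (\<lambda>t. E (q t))"
    using assms(5) unfolding E_flex_def by blast
  have q0: "q 0 = p" using traj unfolding trajectory_def by blast
  obtain T c where T: "T > 0" and sq: "\<forall>t\<in>{0..T}. (\<lambda>k. t^k *\<^sub>R c k) sums q t" and c0: "c 0 = p"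
    using traj_setup[OF traj] by blast
  define Ql where "Ql l t = (\<Sum>n. c n $ l * t^n)" for l t
  have psQ: "ps_on T (\<lambda>n. c n $ l) (Ql l)" for l using comp_ps(1)[OF T sq] unfolding Ql_def by blast
  have qQ: "\<forall>t\<in>{0..T}. q t $ l = Ql l t" for l using comp_ps(2)[OF T sq] unfolding Ql_def by blast
  define u where "u l t = Ql l t - p $ l" for l t
  define bu where "bu l n = c n $ l + (if n = 0 then - p $ l else 0)" for l n
  have psu: "ps_on T (bu l) (u l)" for l
  proof -
    have "ps_on T (\<lambda>n. c n $ l + (if n = 0 then - p $ l else 0)) (\<lambda>t. Ql l t + - p $ l)"
      by (rule ps_add[OF psQ ps_const])
    then show ?thesis unfolding u_def bu_def by simp
  qed
  have bu0: "bu l 0 = 0" for l using c0 by (simp add: bu_def)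
  have u0: "u l 0 = 0" for l using ps_at0[OF psu T] bu0 by simp
  have "\<forall>l. \<exists>C\<ge>0. \<forall>t. \<bar>t\<bar> \<le> T/2 \<longrightarrow> \<bar>u l t - (\<Sum>i<1. bu l i * t^i)\<bar> \<le> C * \<bar>t\<bar>^1"
  proof
    fix l
    have "0 < T/2" "T/2 < T" using T by auto
    from ps_tail[OF psu this] show "\<exists>C\<ge>0. \<forall>t. \<bar>t\<bar> \<le> T/2 \<longrightarrow> \<bar>u l t - (\<Sum>i<1. bu l i * t^i)\<bar> \<le> C * \<bar>t\<bar>^1"
      by blast
  qed
  then obtain Kf where Kf: "\<forall>l. Kf l \<ge> 0 \<and> (\<forall>t. \<bar>t\<bar> \<le> T/2 \<longrightarrow> \<bar>u l t - (\<Sum>i<1. bu l i * t^i)\<bar> \<le> Kf l * \<bar>t\<bar>^1)"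
    by metis
  define Ku where "Ku = (\<Sum>l\<in>UNIV. Kf l)"
  have Ku0: "Ku \<ge> 0" unfolding Ku_def using Kf by (simp add: sum_nonneg)
  have ubound: "\<bar>u l t\<bar> \<le> Ku * \<bar>t\<bar>" if "\<bar>t\<bar> \<le> T/2" for l t
  proof -
    have "\<bar>u l t\<bar> \<le> Kf l * \<bar>t\<bar>" using Kf that bu0 by simp
    also have "\<dots> \<le> Ku * \<bar>t\<bar>" unfolding Ku_def
      by (rule mult_right_mono[OF member_le_sum]) (use Kf in auto)
    finally show ?thesis .
  qed
  define U where "U t = (\<chi> l. u l t)" for t
  have pU: "p + U t = q t" if "t \<in> {0..T}" for t
    using qQ that by (simp add: vec_eq_iff U_def u_def)
  have normU: "norm (U t) \<le> real CARD('n) * (Ku * \<bar>t\<bar>)" if "\<bar>t\<bar> \<le> T/2" for t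
  proof -
    have "norm (U t) \<le> (\<Sum>l\<in>UNIV. \<bar>U t $ l\<bar>)" by (rule norm_le_l1_cart)
    also have "\<dots> \<le> (\<Sum>l\<in>(UNIV::'n set). Ku * \<bar>t\<bar>)"
      by (rule sum_mono) (use ubound that in \<open>simp add: U_def\<close>)
    also have "\<dots> = real CARD('n) * (Ku * \<bar>t\<bar>)" by simp
    finally show ?thesis .
  qed
  obtain r ca where r: "r > 0"
    and hs: "\<forall>x\<in>ball p r. ((\<lambda>\<alpha>. ca \<alpha> * (\<Prod>i\<in>UNIV. (x$i - p$i)^\<alpha> i)) has_sum E x) UNIV"
    using assms(1) unfolding real_analytic_at_def by blast
  define \<rho> where "\<rho> = r / (2 * real CARD('n))"
  have \<rho>: "\<rho> > 0" using r by (simp add: \<rho>_def)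
  have card\<rho>: "real CARD('n) * \<rho> = r/2" unfolding \<rho>_def by simp
  have Ssum: "(\<lambda>\<alpha>. \<bar>ca \<alpha> * \<rho> ^ sum \<alpha> UNIV\<bar>) summable_on UNIV"
  proof -
    define x0 where "x0 = p + (\<chi> i::'n. \<rho>)"
    have "norm (\<chi> i::'n. \<rho>) \<le> (\<Sum>i\<in>UNIV. \<bar>(\<chi> i::'n. \<rho>) $ i\<bar>)" by (rule norm_le_l1_cart)
    also have "\<dots> = r/2" using \<rho> card\<rho> by simp
    finally have "x0 \<in> ball p r" using r by (simp add: x0_def dist_norm)
    then have hx: "((\<lambda>\<alpha>. ca \<alpha> * (\<Prod>i\<in>UNIV. (x0$i - p$i)^\<alpha> i)) has_sum E x0) UNIV" using hs by blast
    have "(\<Prod>i\<in>UNIV. (x0$i - p$i)^\<alpha> i) = \<rho> ^ sum \<alpha> UNIV" for \<alpha>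
      by (simp add: x0_def power_sum)
    then have "((\<lambda>\<alpha>. ca \<alpha> * \<rho> ^ sum \<alpha> UNIV) has_sum E x0) UNIV" using hx by simp
    then have "(\<lambda>\<alpha>. ca \<alpha> * \<rho> ^ sum \<alpha> UNIV) summable_on UNIV" by (rule has_sum_imp_summable)
    then have "(\<lambda>\<alpha>. norm (ca \<alpha> * \<rho> ^ sum \<alpha> UNIV)) summable_on UNIV"
      by (rule summable_on_iff_abs_summable_on_real[THEN iffD1])
    then show ?thesis by simp
  qed
  define S where "S = (\<Sum>\<^sub>\<infinity>\<alpha>. \<bar>ca \<alpha> * \<rho> ^ sum \<alpha> UNIV\<bar>)"
  have S0: "S \<ge> 0" unfolding S_def by (rule infsum_nonneg) simp
  define N0 where "N0 = Suc (2*k+1)"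
  define B where "B = {\<alpha> :: 'n \<Rightarrow> nat. sum \<alpha> UNIV < N0}"
  define G where "G t = (\<Sum>\<alpha>\<in>B. ca \<alpha> * (\<Prod>i\<in>UNIV. (u i t)^\<alpha> i))" for t
  have "\<exists>b. ps_on T b G"
  proof -
    have "\<exists>b. ps_on T b (\<lambda>t. ca \<alpha> * (\<Prod>i\<in>UNIV. (u i t)^\<alpha> i))" for \<alpha>
    proof -
      have "\<exists>b. ps_on T b (\<lambda>t. (u i t)^\<alpha> i)" for i using ps_ex_power[of T "u i" "\<alpha> i"] psu by blast
      then have "\<exists>b. ps_on T b (\<lambda>t. \<Prod>i\<in>UNIV. (u i t)^\<alpha> i)" by (intro ps_ex_prod) auto
      then show ?thesis using ps_ex_mult[OF ps_ex_const[of T "ca \<alpha>"]] by blast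
    qed
    then show ?thesis unfolding G_def
      using ps_ex_sum[where A=B and K=T and f="\<lambda>\<alpha> t. ca \<alpha> * (\<Prod>i\<in>UNIV. (u i t)^\<alpha> i)"] finite_B
      unfolding B_def by blast
  qed
  then obtain bG where psG: "ps_on T bG G" by blast
  define \<delta>1 where "\<delta>1 = min (T/2) (\<rho>/(Ku+1))"
  have "\<delta>1 \<le> T/2" unfolding \<delta>1_def by (rule min.cobounded1)
  moreover have "\<delta>1 > 0" using T \<rho> Ku0 by (simp add: \<delta>1_def)
  ultimately have \<delta>1: "\<delta>1 > 0" "\<delta>1 \<le> T/2" by auto
  define Cg where "Cg = (Ku/\<rho>)^N0 * S"
  have Cg0: "Cg \<ge> 0" unfolding Cg_def using Ku0 \<rho> S0 by simp
  have tailE: "\<bar>E (p + U t) - G t\<bar> \<le> Cg * \<bar>t\<bar>^N0" if "\<bar>t\<bar> \<le> \<delta>1" for t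
  proof -
    have t2: "\<bar>t\<bar> \<le> T/2" and t\<rho>: "\<bar>t\<bar> \<le> \<rho>/(Ku+1)" using that by (auto simp: \<delta>1_def)
    define M where "M = Ku * \<bar>t\<bar>"
    have M0: "0 \<le> M" using Ku0 by (simp add: M_def)
    have "\<bar>t\<bar> * (Ku + 1) \<le> \<rho>" using t\<rho> Ku0 by (simp add: pos_le_divide_eq)
    then have M\<rho>: "M \<le> \<rho>" unfolding M_def by (simp add: algebra_simps)
    have hU: "\<forall>i. \<bar>U t $ i\<bar> \<le> M" using ubound t2 by (simp add: U_def M_def)
    have "norm (U t) \<le> real CARD('n) * M" using normU[OF t2] by (simp add: M_def)
    also have "\<dots> \<le> real CARD('n) * \<rho>" using M\<rho> by (intro mult_left_mono) auto
    finally have hin: "p + U t \<in> ball p r" using card\<rho> r by (simp add: dist_norm)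
    have "\<bar>E (p + U t) - (\<Sum>\<alpha>\<in>{\<alpha>. sum \<alpha> UNIV < N0}. ca \<alpha> * (\<Prod>i\<in>UNIV. (U t$i)^\<alpha> i))\<bar> \<le> (M/\<rho>)^N0 * S"
      using E_tail[OF hs \<rho> Ssum hU M0 M\<rho> hin] unfolding S_def .
    moreover have "(\<Sum>\<alpha>\<in>{\<alpha>. sum \<alpha> UNIV < N0}. ca \<alpha> * (\<Prod>i\<in>UNIV. (U t$i)^\<alpha> i)) = G t"
      by (simp add: G_def B_def U_def)
    moreover have "(M/\<rho>)^N0 * S = Cg * \<bar>t\<bar>^N0"
      by (simp add: M_def Cg_def power_mult_distrib power_divide)
    ultimately show ?thesis by simp
  qed
  have U0: "U 0 = 0" using u0 by (simp add: U_def vec_eq_iff)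
  have G0: "G 0 = E p"
  proof -
    have "\<bar>E (p + U 0) - G 0\<bar> \<le> Cg * \<bar>0\<bar>^N0" using tailE[of 0] \<delta>1 by simp
    then show ?thesis using U0 by (simp add: N0_def)
  qed
  define H where "H t = G t - G 0" for t
  define bH where "bH n = bG n + (if n = 0 then - G 0 else 0)" for n
  have psH: "ps_on T bH H"
  proof -
    have "ps_on T (\<lambda>n. bG n + (if n = 0 then - G 0 else 0)) (\<lambda>t. G t + - G 0)"
      by (rule ps_add[OF psG ps_const])
    then show ?thesis unfolding H_def bH_def by simp
  qed
  have Hsmall: "\<forall>e>0. \<exists>d>0. \<forall>t. 0 < t \<and> t < d \<longrightarrow> \<bar>H t\<bar> \<le> e * t^(2*k)"
  proof (intro allI impI)
    fix e :: real assume e: "e > 0"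
    then have "e/2 > 0" by simp
    then obtain d0 where d0: "d0 > 0" "\<forall>t\<in>{0..d0}. \<bar>E (q t) - E (q 0)\<bar> \<le> (e/2) * t^(2*k)"
      using kvan_bound[OF van] by blast
    define d where "d = min (min d0 \<delta>1) (min 1 (e/(2*(Cg+1))))"
    show "\<exists>d>0. \<forall>t. 0 < t \<and> t < d \<longrightarrow> \<bar>H t\<bar> \<le> e * t^(2*k)"
    proof (intro exI[of _ d] conjI allI impI)
      show "d > 0" using d0 \<delta>1 e Cg0 by (simp add: d_def)
      fix t :: real assume t: "0 < t \<and> t < d"
      have td: "t \<le> d0" "t \<le> \<delta>1" "t \<le> 1" "t \<le> e/(2*(Cg+1))" using t by (auto simp: d_def)
      have tT: "t \<in> {0..T}" using t td \<delta>1 by auto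
      have qt: "q t = p + U t" using pU[OF tT] by simp
      have A: "\<bar>E (p + U t) - E p\<bar> \<le> (e/2) * t^(2*k)" 
      proof -
        have "t \<in> {0..d0}" using t td by auto
        then have "\<bar>E (q t) - E (q 0)\<bar> \<le> (e/2) * t^(2*k)" using d0(2) by blast
        then show ?thesis using q0 qt by simp
      qed
      have Bb: "\<bar>E (p + U t) - G t\<bar> \<le> Cg * t^N0" using tailE[of t] t td by simp
      have "t * (2*(Cg+1)) \<le> e" using td(4) Cg0 by (simp add: pos_le_divide_eq)
      then have Ct: "Cg * t \<le> e/2" using t Cg0 by (simp add: algebra_simps)
      have "Cg * t^N0 = (Cg * t) * t * t^(2*k)" by (simp add: N0_def algebra_simps)
      also have "\<dots> \<le> (e/2) * 1 * t^(2*k)"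
        using Ct td t e by (intro mult_right_mono mult_mono) auto
      finally have C2: "Cg * t^N0 \<le> (e/2) * t^(2*k)" by simp
      have "\<bar>H t\<bar> \<le> \<bar>E (p + U t) - E p\<bar> + \<bar>E (p + U t) - G t\<bar>" unfolding H_def G0 by linarith
      then show "\<bar>H t\<bar> \<le> e * t^(2*k)" using A Bb C2 by linarith
    qed
  qed
  have bHz: "\<forall>i\<le>2*k. bH i = 0" by (rule ps_unique[OF psH T Hsmall])
  obtain K2 where K2: "K2 \<ge> 0" "\<forall>t. \<bar>t\<bar> \<le> T/2 \<longrightarrow> \<bar>H t - (\<Sum>i<Suc (2*k+1). bH i * t^i)\<bar> \<le> K2 * \<bar>t\<bar>^Suc (2*k+1)"
    using ps_tail[OF psH, of "T/2" "Suc (2*k+1)"] T by auto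
  define \<beta> where "\<beta> = bH (2*k+1)"
  have sumH: "(\<Sum>i<Suc (2*k+1). bH i * t^i) = \<beta> * t^(2*k+1)" for t
  proof -
    have "(\<Sum>i<2*k+1. bH i * t^i) = 0" by (rule sum.neutral) (use bHz in auto)
    then show ?thesis by (simp add: \<beta>_def)
  qed
  have HT: "\<bar>H t - \<beta> * t^(2*k+1)\<bar> \<le> K2 * \<bar>t\<bar>^N0" if "\<bar>t\<bar> \<le> T/2" for t
    using K2(2) that sumH unfolding N0_def by metis
  obtain rm where rm: "rm > 0" "\<forall>x\<in>ball p rm. E p \<le> E x" using assms(2) unfolding local_min_def by blast
  have \<beta>0: "\<beta> \<le> 0"
  proof (rule ccontr)
    assume "\<not> \<beta> \<le> 0" then have \<beta>p: "\<beta> > 0" by simp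
    define s where "s = min (min \<delta>1 (rm / (2 * (real CARD('n) * Ku + 1)))) (\<beta> / (2 * (K2 + Cg + 1)))"
    have dp1: "2 * (real CARD('n) * Ku + 1) > 0"
      using Ku0 by (intro mult_pos_pos add_nonneg_pos mult_nonneg_nonneg) simp_all
    then have p1: "rm / (2 * (real CARD('n) * Ku + 1)) > 0" using rm(1) by (rule divide_pos_pos[rotated])
    have dp2: "2 * (K2 + Cg + 1) > 0"
      using K2(1) Cg0 by (intro mult_pos_pos add_nonneg_pos add_nonneg_nonneg) simp_all
    then have p2: "\<beta> / (2 * (K2 + Cg + 1)) > 0" using \<beta>p by (rule divide_pos_pos[rotated])
    have s0: "s > 0" using \<delta>1(1) p1 p2 by (simp add: s_def)
    have s1: "s \<le> \<delta>1" "s \<le> rm / (2 * (real CARD('n) * Ku + 1))" "s \<le> \<beta> / (2 * (K2 + Cg + 1))"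
      by (auto simp: s_def)
    have as: "\<bar>-s\<bar> \<le> \<delta>1" "\<bar>-s\<bar> \<le> T/2" using s0 s1 \<delta>1 by auto
    have "s * (2 * (real CARD('n) * Ku + 1)) \<le> rm" using pos_le_divide_eq[OF dp1] s1(2) by blast
    then have "real CARD('n) * (Ku * s) < rm" using s0 rm Ku0 by (simp add: algebra_simps)
    then have "norm (U (-s)) < rm" using normU[OF as(2)] s0 by simp
    then have "p + U (-s) \<in> ball p rm" by (simp add: dist_norm)
    then have Emin: "E p \<le> E (p + U (-s))" using rm by blast
    have e1: "E (p + U (-s)) \<le> G (-s) + Cg * s^N0" using tailE[OF as(1)] s0 by simp
    have e2: "H (-s) \<le> \<beta> * (-s)^(2*k+1) + K2 * s^N0" using HT[OF as(2)] s0 by simp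
    have odd: "(-s)^(2*k+1) = - (s^(2*k+1))" by (simp add: power_minus_odd)
    have "\<beta> * s^(2*k+1) \<le> (K2 + Cg) * s^N0"
      using Emin e1 e2 odd G0 unfolding H_def by (simp add: algebra_simps)
    then have "\<beta> * s^(2*k+1) \<le> ((K2 + Cg) * s) * s^(2*k+1)" by (simp add: N0_def algebra_simps)
    moreover have "s^(2*k+1) > 0" using s0 by simp
    ultimately have "\<beta> \<le> (K2 + Cg) * s" by (metis mult_le_cancel_right_pos)
    moreover have "s * (2 * (K2 + Cg + 1)) \<le> \<beta>" using pos_le_divide_eq[OF dp2] s1(3) by blast
    ultimately show False using s0 K2 Cg0 \<beta>p by (simp add: algebra_simps)
  qed
  have "\<not> k_vanishing j q" using act unfolding k_active_def by blast
  then obtain l m where lm: "m \<in> {1..j}" "c m $ l \<noteq> 0" using coeffs_vanish[OF T sq] by blast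
  define m0 where "m0 = (LEAST m. 1 \<le> m \<and> c m $ l \<noteq> 0)"
  have m0: "1 \<le> m0" "c m0 $ l \<noteq> 0" using LeastI[of "\<lambda>m. 1 \<le> m \<and> c m $ l \<noteq> 0" m] lm by (auto simp: m0_def)
  have m0j: "m0 \<le> j" using Least_le[of "\<lambda>m. 1 \<le> m \<and> c m $ l \<noteq> 0" m] lm by (auto simp: m0_def)
  have below: "bu l i = 0" if "i < m0" for i
  proof (cases "i = 0")
    case True then show ?thesis using bu0 by simp
  next
    case False
    then have "c i $ l = 0" using not_less_Least[of i "\<lambda>m. 1 \<le> m \<and> c m $ l \<noteq> 0"] that by (auto simp: m0_def)
    then show ?thesis using False by (simp add: bu_def)
  qed
  have bum0: "bu l m0 = c m0 $ l" using m0 by (simp add: bu_def)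
  obtain K3 where K3: "K3 \<ge> 0" "\<forall>t. \<bar>t\<bar> \<le> T/2 \<longrightarrow> \<bar>u l t - (\<Sum>i<Suc m0. bu l i * t^i)\<bar> \<le> K3 * \<bar>t\<bar>^Suc m0"
    using ps_tail[OF psu[of l], of "T/2" "Suc m0"] T by auto
  have sumu: "(\<Sum>i<Suc m0. bu l i * t^i) = c m0 $ l * t^m0" for t
  proof -
    have "(\<Sum>i<m0. bu l i * t^i) = 0" by (rule sum.neutral) (use below in auto)
    then show ?thesis using bum0 by simp
  qed
  define a where "a = \<bar>c m0 $ l\<bar>"
  have a0: "a > 0" using m0 by (simp add: a_def)
  define \<delta>2 where "\<delta>2 = min (T/2) (min 1 (a/(2*(K3+1))))"
  have \<delta>2: "\<delta>2 > 0" using T a0 K3 by (simp add: \<delta>2_def)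
  have lower: "(a/2) * t^j \<le> norm (q t - p)" if t: "t \<in> {0..\<delta>2}" for t
  proof -
    have td: "t \<le> T/2" "t \<le> 1" "t \<le> a/(2*(K3+1))" "0 \<le> t" using t by (auto simp: \<delta>2_def)
    have tT: "t \<in> {0..T}" using td T by auto
    have "q t - p = U t" using pU[OF tT] by (simp add: algebra_simps)
    then have n1: "\<bar>u l t\<bar> \<le> norm (q t - p)" using component_le_norm_cart[of "U t" l] by (simp add: U_def)
    have "\<bar>t\<bar> \<le> T/2" using td by simp
    then have "\<bar>u l t - (\<Sum>i<Suc m0. bu l i * t^i)\<bar> \<le> K3 * \<bar>t\<bar>^Suc m0" using K3(2) by blast
    then have tl: "\<bar>u l t - c m0 $ l * t^m0\<bar> \<le> K3 * t^Suc m0"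
      unfolding sumu[of t] abs_of_nonneg[OF td(4)] .
    have "t * (2*(K3+1)) \<le> a" using td(3) K3 by (simp add: pos_le_divide_eq)
    then have K3t: "K3 * t \<le> a/2" using td K3 by (simp add: algebra_simps)
    have "a * t^m0 = \<bar>c m0 $ l * t^m0\<bar>" using td by (simp add: a_def abs_mult)
    also have "\<dots> \<le> \<bar>u l t\<bar> + K3 * t^Suc m0" using tl by linarith
    also have "K3 * t^Suc m0 = (K3 * t) * t^m0" by simp
    also have "\<dots> \<le> (a/2) * t^m0" using K3t td by (intro mult_right_mono) auto
    finally have "(a/2) * t^m0 \<le> \<bar>u l t\<bar>" by simp
    moreover have "(a/2) * t^j \<le> (a/2) * t^m0"
      using td m0j a0 by (intro mult_left_mono power_decreasing) auto
    ultimately show ?thesis using n1 by linarith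
  qed
  define s where "s = (2 * real k + 2) / real j"
  have jpos: "real j > 0" using assms(3) by simp
  have s0: "s > 0" using jpos by (simp add: s_def)
  have js: "real j * s = real N0" using jpos by (simp add: s_def N0_def)
  define c2 where "c2 = (K2 + Cg + 1) / (a/2) powr s"
  define \<delta> where "\<delta> = min \<delta>1 \<delta>2"
  have c2pos: "c2 > 0" using K2 Cg0 a0 by (simp add: c2_def)
  have \<delta>pos: "\<delta> > 0" using \<delta>1 \<delta>2 by (simp add: \<delta>_def)
  have main: "\<forall>t\<in>{0..\<delta>}. E (q t) - E p \<le> c2 * norm (q t - p) powr s"
  proof
    fix t assume t: "t \<in> {0..\<delta>}"
    have t1: "\<bar>t\<bar> \<le> \<delta>1" "t \<in> {0..\<delta>2}" "0 \<le> t" using t by (auto simp: \<delta>_def)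
    have tT: "t \<in> {0..T}" using t1 \<delta>1 by auto
    have upper: "E (q t) - E p \<le> (K2 + Cg) * t^N0"
    proof -
      have "E (q t) \<le> G t + Cg * t^N0" using tailE[OF t1(1)] pU[OF tT] t1 by simp
      moreover have "H t \<le> \<beta> * t^(2*k+1) + K2 * t^N0" using HT[of t] t1 \<delta>1 by simp
      moreover have "\<beta> * t^(2*k+1) \<le> 0" using \<beta>0 t1 by (simp add: mult_nonpos_nonneg)
      ultimately show ?thesis using G0 unfolding H_def by (simp add: algebra_simps)
    qed
    have key: "t^N0 * (a/2) powr s \<le> norm (q t - p) powr s"
    proof (cases "t = 0")
      case True then show ?thesis using s0 by (simp add: N0_def)
    next
      case False
      then have tp: "t > 0" using t1 by simp
      have "(t^j) powr s = t^N0"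
      proof -
        have "(t^j) powr s = (t powr real j) powr s" using tp by (simp add: powr_realpow)
        also have "\<dots> = t powr (real N0)" using js by (simp add: powr_powr)
        also have "\<dots> = t^N0" using tp by (simp add: powr_realpow)
        finally show ?thesis .
      qed
      note tj = this
      have pm: "((a/2) * t^j) powr s = (a/2) powr s * (t^j) powr s"
        by (rule powr_mult; use a0 tp in simp)
      have "t^N0 * (a/2) powr s = ((a/2) * t^j) powr s"
        unfolding pm tj by (rule mult.commute)
      also have "\<dots> \<le> norm (q t - p) powr s"
        by (rule powr_mono2) (use s0 a0 tp lower[OF t1(2)] in auto)
      finally show ?thesis .
    qed
    have "E (q t) - E p \<le> (K2 + Cg + 1) * t^N0" 
    proof -
      have "0 \<le> t^N0" using t1 by simp
      then have "(K2 + Cg) * t^N0 \<le> (K2 + Cg + 1) * t^N0" by (rule mult_right_mono[rotated]) simp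
      then show ?thesis using upper by (rule order_trans[rotated])
    qed
    also have "\<dots> = c2 * (t^N0 * (a/2) powr s)" using a0 by (simp add: c2_def)
    also have "\<dots> \<le> c2 * norm (q t - p) powr s"
      by (rule mult_left_mono[OF key]) (use K2 Cg0 a0 in \<open>simp add: c2_def\<close>)
    finally show "E (q t) - E p \<le> c2 * norm (q t - p) powr s" .
  qed
  show ?thesis unfolding grows_sometimes_slowly_def s_def[symmetric]
    using traj c2pos \<delta>pos main by blast
qed


end
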